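(* Let $\{p,q\}\subset[1,\infty]$ with $q<p$, let $\mathbb Q$ be a probability measure on $(\Omega,\mathcal F)$ equivalent to $\mathbb P$, and let $(\mathcal B_n)_{n\in\mathbb N_0}$ be $\sigma$-subfields. Then $\|\mathbb P_{\mathcal B_n}-\mathbb P_{\mathcal B_0}\|_{L^p(\mathbb P)\to L^q(\mathbb P)}\to0$ if and only if $\|\mathbb Q_{\mathcal B_n}-\mathbb Q_{\mathcal B_0}\|_{L^p(\mathbb Q)\to L^q(\mathbb Q)}\to0$.
   Context: Let $(\Omega,\mathcal F,\mathbb P)$ be a (not necessarily complete) probability space and $\mathcal N:=\{F\in\mathcal F:\mathbb P(F)=0\}$. A $\sigma$-subfield is a sub-$\sigma$-field $\mathcal A\subset\mathcal F$ with $\mathcal A=\sigma(\mathcal A\cup\mathcal N)$ (the same notion for any $\mathbb Q\sim\mathbb P$). For a probability measure $\mathbb R\sim\mathbb P$ and a $\sigma$-subfield $\mathcal A$, $\mathbb R_{\mathcal A}f:=\mathbb E^{\mathbb R}[f\mid\mathcal A]$, viewed as a bounded linear operator between the real normed spaces $L^p(\mathbb R)$ and $L^q(\mathbb R)$, with operator norm $\|\cdot\|_{L^p(\mathbb R)\to L^q(\mathbb R)}$. *)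

theory Defs
  imports "HOL-Probability.Probability"
begin

definition sigma_subfield :: "'a measure \<Rightarrow> 'a measure \<Rightarrow> bool" where
  "sigma_subfield M F \<longleftrightarrow> subalgebra M F \<and>
     sets F = sigma_sets (space M) (sets F \<union> null_sets M)"

definition equiv_measure :: "'a measure \<Rightarrow> 'a measure \<Rightarrow> bool" where
  "equiv_measure M N \<longleftrightarrow> sets N = sets M \<and> null_sets N = null_sets M"

definition lp_norm :: "'a measure \<Rightarrow> ennreal \<Rightarrow> ('a \<Rightarrow> real) \<Rightarrow> ennreal" where
  "lp_norm M p f =
     (if p = \<infinity> then e2ennreal (esssup M (\<lambda>x. ereal \<bar>f x\<bar>))
      else (let I = (\<integral>\<^sup>+ x. ennreal (\<bar>f x\<bar> powr enn2real p) \<partial>M) in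
            if I = \<infinity> then \<infinity> else ennreal (enn2real I powr (1 / enn2real p))))"

definition cond_exp_diff_opnorm ::
  "'a measure \<Rightarrow> ennreal \<Rightarrow> ennreal \<Rightarrow> 'a measure \<Rightarrow> 'a measure \<Rightarrow> ennreal" where
  "cond_exp_diff_opnorm M p q F G =
     (SUP f \<in> {f \<in> borel_measurable M. lp_norm M p f \<le> 1}.
        lp_norm M q (\<lambda>x. real_cond_exp M F f x - real_cond_exp M G f x))"

end

theory Submission
  imports Defs
begin


lemma sfs:
  assumes "prob_space R" "subalgebra R F"
  shows "sigma_finite_subalgebra R F"
proof -
  interpret prob_space R by fact
  have "finite_measure_subalgebra R F"
    unfolding finite_measure_subalgebra_def finite_measure_subalgebra_axioms_def
    using assms(2) finite_measure_axioms by auto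
  then show ?thesis by (rule finite_measure_subalgebra_is_sigma_finite)
qed

lemma ce_bound:
  assumes "prob_space R" "subalgebra R F" "g \<in> borel_measurable R" "AE x in R. \<bar>g x\<bar> \<le> C"
  shows "AE x in R. \<bar>real_cond_exp R F g x\<bar> \<le> C"
proof -
  interpret sigma_finite_subalgebra R F using sfs assms by auto
  interpret p: prob_space R by fact
  have ig: "integrable R g" using assms(3,4) by (intro p.integrable_const_bound[of _ C]) auto
  have "AE x in R. real_cond_exp R F g x \<le> C"
    using assms(4) by (intro real_cond_exp_le_c[OF ig]) auto
  moreover have "AE x in R. real_cond_exp R F g x \<ge> -C"
    using assms(4) by (intro real_cond_exp_ge_c[OF ig]) auto
  ultimately show ?thesis by eventually_elim auto
qed

lemma convex_abs_powr:
  assumes "(r::real) \<ge> 1"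
  shows "convex_on UNIV (\<lambda>x::real. \<bar>x\<bar> powr r)"
proof (rule convex_onI)
  fix t x y :: real assume t: "0 < t" "t < 1"
  have key: "((1-t)*a + t*b) powr r \<le> (1-t) * a powr r + t * b powr r"
    if ab: "a \<ge> 0" "b \<ge> 0" for a b :: real
  proof -
    consider "a > 0" "b > 0" | "a = 0" | "b = 0" using ab by linarith
    then show ?thesis
    proof cases
      case 1
      have "convex_on {0<..} (\<lambda>x. x powr r)" using powr_convex assms by blast
      from convex_onD[OF this, of t a b] 1 t show ?thesis by (simp add: algebra_simps)
    next
      case 2
      have "(t*b) powr r = t powr r * b powr r" using t ab by (simp add: powr_mult)
      also have "\<dots> \<le> t * b powr r"
      proof (rule mult_right_mono)
        show "t powr r \<le> t" using t assms by (intro powr_le_one_le) auto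
      qed simp
      finally show ?thesis using 2 by simp
    next
      case 3
      have "((1-t)*a) powr r = (1-t) powr r * a powr r" using t ab by (simp add: powr_mult)
      also have "\<dots> \<le> (1-t) * a powr r"
      proof (rule mult_right_mono)
        show "(1-t) powr r \<le> 1-t" using t assms by (intro powr_le_one_le) auto
      qed simp
      finally show ?thesis using 3 by simp
    qed
  qed
  have "\<bar>(1-t)*x + t*y\<bar> \<le> (1-t)*\<bar>x\<bar> + t*\<bar>y\<bar>"
  proof -
    have "\<bar>(1-t)*x + t*y\<bar> \<le> \<bar>(1-t)*x\<bar> + \<bar>t*y\<bar>" by (rule abs_triangle_ineq)
    also have "\<dots> = (1-t)*\<bar>x\<bar> + t*\<bar>y\<bar>" using t by (simp add: abs_mult)
    finally show ?thesis .
  qed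
  hence "\<bar>(1-t)*x + t*y\<bar> powr r \<le> ((1-t)*\<bar>x\<bar> + t*\<bar>y\<bar>) powr r"
    using assms by (intro powr_mono2) auto
  also have "\<dots> \<le> (1-t) * \<bar>x\<bar> powr r + t * \<bar>y\<bar> powr r" by (rule key) auto
  finally show "\<bar>(1 - t) *\<^sub>R x + t *\<^sub>R y\<bar> powr r \<le> (1 - t) * \<bar>x\<bar> powr r + t * \<bar>y\<bar> powr r"
    by simp
qed simp

lemma ce_convex_int:
  fixes \<phi> :: "real \<Rightarrow> real"
  assumes "prob_space R" "subalgebra R F" "integrable R g" "integrable R (\<lambda>x. \<phi> (g x))"
    "convex_on UNIV \<phi>" "\<phi> \<in> borel_measurable borel"
  shows "integrable R (\<lambda>x. \<phi> (real_cond_exp R F g x))"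
    "(\<integral>x. \<phi> (real_cond_exp R F g x) \<partial>R) \<le> (\<integral>x. \<phi> (g x) \<partial>R)"
proof -
  interpret sigma_finite_subalgebra R F using sfs assms by auto
  show i1: "integrable R (\<lambda>x. \<phi> (real_cond_exp R F g x))"
    by (rule integrable_convex_cond_exp[of g UNIV 0 0]) (use assms in auto)
  have "AE x in R. \<phi> (real_cond_exp R F g x) \<le> real_cond_exp R F (\<lambda>x. \<phi> (g x)) x"
    by (rule real_cond_exp_jensens_inequality(2)[of g UNIV 0 0]) (use assms in auto)
  hence "(\<integral>x. \<phi> (real_cond_exp R F g x) \<partial>R) \<le> (\<integral>x. real_cond_exp R F (\<lambda>x. \<phi> (g x)) x \<partial>R)"
    by (intro integral_mono_AE i1 real_cond_exp_int(1) assms)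
  also have "\<dots> = (\<integral>x. \<phi> (g x) \<partial>R)" by (rule real_cond_exp_int(2)) (rule assms)
  finally show "(\<integral>x. \<phi> (real_cond_exp R F g x) \<partial>R) \<le> (\<integral>x. \<phi> (g x) \<partial>R)" .
qed

lemma convex_abs: "convex_on UNIV (abs :: real \<Rightarrow> real)"
  using convex_abs_powr[of 1] by simp

lemma ce_L1:
  assumes "prob_space R" "subalgebra R F" "integrable R g"
  shows "(\<integral>x. \<bar>real_cond_exp R F g x\<bar> \<partial>R) \<le> (\<integral>x. \<bar>g x\<bar> \<partial>R)"
  using ce_convex_int(2)[OF assms _ convex_abs] assms(3) by auto




definition cdiff :: "'a measure \<Rightarrow> 'a measure \<Rightarrow> 'a measure \<Rightarrow> ('a \<Rightarrow> real) \<Rightarrow> 'a \<Rightarrow> real" where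
  "cdiff R F G f = (\<lambda>x. real_cond_exp R F f x - real_cond_exp R G f x)"

definition cb :: "'a measure \<Rightarrow> 'a measure \<Rightarrow> 'a measure \<Rightarrow> ennreal" where
  "cb R F G = (SUP f \<in> {f \<in> borel_measurable R. \<forall>x\<in>space R. \<bar>f x\<bar> \<le> 1}.
      ennreal (\<integral>x. \<bar>cdiff R F G f x\<bar> \<partial>R))"

lemma cdiff_meas[measurable]: "cdiff R F G f \<in> borel_measurable R"
  unfolding cdiff_def by measurable

lemma cdiff_bound:
  assumes "prob_space R" "subalgebra R F" "subalgebra R G" "f \<in> borel_measurable R"
    "AE x in R. \<bar>f x\<bar> \<le> C"
  shows "AE x in R. \<bar>cdiff R F G f x\<bar> \<le> 2 * C"
  using ce_bound[OF assms(1,2,4,5)] ce_bound[OF assms(1,3,4,5)]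
  by eventually_elim (auto simp: cdiff_def)

lemma cb_term_le2:
  assumes "prob_space R" "subalgebra R F" "subalgebra R G" "f \<in> borel_measurable R"
    "\<forall>x\<in>space R. \<bar>f x\<bar> \<le> 1"
  shows "(\<integral>x. \<bar>cdiff R F G f x\<bar> \<partial>R) \<le> 2"
proof -
  interpret prob_space R by fact
  have ae: "AE x in R. \<bar>cdiff R F G f x\<bar> \<le> 2"
    using cdiff_bound[OF assms(1-4), of 1] assms(5) by auto
  have "(\<integral>x. \<bar>cdiff R F G f x\<bar> \<partial>R) \<le> (\<integral>x. 2 \<partial>R)"
    by (rule integral_mono_AE) (use ae in \<open>auto intro!: integrable_const_bound[of _ 2]\<close>)
  also have "\<dots> = 2" by (simp add: prob_space)
  finally show ?thesis .
qed

lemma cb_le2: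
  assumes "prob_space R" "subalgebra R F" "subalgebra R G"
  shows "cb R F G \<le> 2"
  unfolding cb_def
  by (rule SUP_least) (use cb_term_le2[OF assms] in \<open>auto simp del: ennreal_numeral simp: ennreal_numeral[symmetric]\<close>)

lemma cb_use:
  assumes "prob_space R" "subalgebra R F" "subalgebra R G" "f \<in> borel_measurable R"
    "\<forall>x\<in>space R. \<bar>f x\<bar> \<le> C" "C > 0"
  shows "(\<integral>x. \<bar>cdiff R F G f x\<bar> \<partial>R) \<le> C * enn2real (cb R F G)"
proof -
  interpret prob_space R by fact
  interpret sF: sigma_finite_subalgebra R F using sfs assms by auto
  interpret sG: sigma_finite_subalgebra R G using sfs assms by auto
  define g where "g = (\<lambda>x. f x / C)"
  have gm: "g \<in> borel_measurable R" unfolding g_def using assms(4) by measurable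
  have gb: "\<forall>x\<in>space R. \<bar>g x\<bar> \<le> 1" using assms(5,6) by (auto simp: g_def abs_div)
  have "ennreal (\<integral>x. \<bar>cdiff R F G g x\<bar> \<partial>R) \<le> cb R F G"
    unfolding cb_def by (rule SUP_upper) (use gm gb in auto)
  hence le: "(\<integral>x. \<bar>cdiff R F G g x\<bar> \<partial>R) \<le> enn2real (cb R F G)"
    using cb_le2[OF assms(1-3)]
    by (metis enn2real_ennreal enn2real_mono ennreal_numeral_less_top integral_nonneg_AE abs_ge_zero
        AE_I2 order.strict_trans1)
  have fi: "integrable R f" using assms(4,5) by (intro integrable_const_bound[of _ C]) auto
  have "AE x in R. cdiff R F G g x = cdiff R F G f x / C"
    using sF.real_cond_exp_cdiv[OF fi, of C] sG.real_cond_exp_cdiv[OF fi, of C]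
    by eventually_elim (simp add: cdiff_def g_def diff_divide_distrib)
  hence "(\<integral>x. \<bar>cdiff R F G g x\<bar> \<partial>R) = (\<integral>x. \<bar>cdiff R F G f x\<bar> / C \<partial>R)"
    using assms(6) by (intro integral_cong_AE) (auto simp: abs_div)
  also have "\<dots> = (\<integral>x. \<bar>cdiff R F G f x\<bar> \<partial>R) / C" by simp
  finally have "(\<integral>x. \<bar>cdiff R F G f x\<bar> \<partial>R) = C * (\<integral>x. \<bar>cdiff R F G g x\<bar> \<partial>R)"
    using assms(6) by (simp add: field_simps)
  thus ?thesis using mult_left_mono[OF le, of C] assms(6) by simp
qed

lemma lp_inf_le1:
  assumes "f \<in> borel_measurable R" "\<forall>x\<in>space R. \<bar>f x\<bar> \<le> 1"
  shows "lp_norm R \<infinity> f \<le> 1"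
proof -
  have "esssup R (\<lambda>x. ereal \<bar>f x\<bar>) \<le> 1"
    by (rule esssup_I) (use assms in auto)
  hence "e2ennreal (esssup R (\<lambda>x. ereal \<bar>f x\<bar>)) \<le> e2ennreal (ereal 1)"
    by (intro e2ennreal_mono) (simp add: one_ereal_def)
  thus ?thesis by (simp add: lp_norm_def)
qed

lemma lp_inf_from:
  assumes "f \<in> borel_measurable R" "lp_norm R \<infinity> f \<le> 1"
  shows "AE x in R. \<bar>f x\<bar> \<le> 1"
proof -
  have "e2ennreal (esssup R (\<lambda>x. ereal \<bar>f x\<bar>)) \<le> 1" using assms(2) by (simp add: lp_norm_def)
  hence le: "esssup R (\<lambda>x. ereal \<bar>f x\<bar>) \<le> 1"
  proof (cases "esssup R (\<lambda>x. ereal \<bar>f x\<bar>) \<le> 0")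
    case False
    assume a: "e2ennreal (esssup R (\<lambda>x. ereal \<bar>f x\<bar>)) \<le> 1"
    have "esssup R (\<lambda>x. ereal \<bar>f x\<bar>) = enn2ereal (e2ennreal (esssup R (\<lambda>x. ereal \<bar>f x\<bar>)))"
      using False by (simp add: enn2ereal_e2ennreal)
    also have "\<dots> \<le> enn2ereal 1" using a by (simp add: less_eq_ennreal.rep_eq)
    finally show ?thesis by (simp add: one_ennreal.rep_eq)
  next
    case True
    thus ?thesis by (rule order.trans) simp
  qed
  show ?thesis using esssup_AE[of "\<lambda>x. ereal \<bar>f x\<bar>" R]
  proof (rule eventually_mono)
    fix x assume "ereal \<bar>f x\<bar> \<le> esssup R (\<lambda>x. ereal \<bar>f x\<bar>)"
    hence "ereal \<bar>f x\<bar> \<le> 1" using le by (rule order.trans)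
    thus "\<bar>f x\<bar> \<le> 1" by simp
  qed
qed

lemma lp_fin_eq:
  assumes "q \<noteq> \<infinity>" "integrable R (\<lambda>x. \<bar>h x\<bar> powr enn2real q)"
  shows "lp_norm R q h = ennreal ((\<integral>x. \<bar>h x\<bar> powr enn2real q \<partial>R) powr (1 / enn2real q))"
proof -
  have "(\<integral>\<^sup>+ x. ennreal (\<bar>h x\<bar> powr enn2real q) \<partial>R) = ennreal (\<integral>x. \<bar>h x\<bar> powr enn2real q \<partial>R)"
    by (rule nn_integral_eq_integral) (use assms in auto)
  thus ?thesis using assms unfolding lp_norm_def Let_def
    by (simp add: integral_nonneg_AE)
qed

lemma lp_fin_le:
  assumes "q \<noteq> \<infinity>" "0 < enn2real q" "integrable R (\<lambda>x. \<bar>h x\<bar> powr enn2real q)"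
    "(\<integral>x. \<bar>h x\<bar> powr enn2real q \<partial>R) \<le> B"
  shows "lp_norm R q h \<le> ennreal (B powr (1 / enn2real q))"
  unfolding lp_fin_eq[OF assms(1,3)]
  by (intro ennreal_leI powr_mono2) (use assms in \<open>auto intro: integral_nonneg_AE\<close>)

lemma lp_fin_le1:
  assumes "prob_space R" "p \<noteq> \<infinity>" "0 < enn2real p" "f \<in> borel_measurable R"
    "\<forall>x\<in>space R. \<bar>f x\<bar> \<le> 1"
  shows "lp_norm R p f \<le> 1"
proof -
  interpret prob_space R by fact
  have b: "\<forall>x\<in>space R. \<bar>f x\<bar> powr enn2real p \<le> 1"
    using assms(3,5) by (auto intro!: powr_le1)
  have i: "integrable R (\<lambda>x. \<bar>f x\<bar> powr enn2real p)"
    by (rule integrable_const_bound[of _ 1]) (use assms b in auto)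
  have "(\<integral>x. \<bar>f x\<bar> powr enn2real p \<partial>R) \<le> (\<integral>x. 1 \<partial>R)"
    by (rule integral_mono) (use i b in auto)
  also have "\<dots> = 1" by (simp add: prob_space)
  finally have "lp_norm R p f \<le> ennreal (1 powr (1 / enn2real p))"
    by (intro lp_fin_le assms i)
  thus ?thesis by simp
qed

lemma lp_fin_from:
  assumes "p \<noteq> \<infinity>" "0 < enn2real p" "f \<in> borel_measurable R" "lp_norm R p f \<le> 1"
  shows "integrable R (\<lambda>x. \<bar>f x\<bar> powr enn2real p)" "(\<integral>x. \<bar>f x\<bar> powr enn2real p \<partial>R) \<le> 1"
proof -
  define I where "I = (\<integral>\<^sup>+ x. ennreal (\<bar>f x\<bar> powr enn2real p) \<partial>R)"
  have "I \<noteq> \<infinity>" using assms(1,4) by (auto simp: lp_norm_def Let_def I_def top_unique)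
  hence le: "enn2real I powr (1 / enn2real p) \<le> 1"
    using assms(1,4) by (auto simp: lp_norm_def Let_def I_def[symmetric])
  have "enn2real I \<le> 1"
  proof (rule ccontr)
    assume "\<not> enn2real I \<le> 1"
    hence "1 < enn2real I powr (1 / enn2real p)"
      using assms(2) by (intro gr_one_powr) auto
    thus False using le by simp
  qed
  moreover have "I = ennreal (enn2real I)" using \<open>I \<noteq> \<infinity>\<close> by (simp add: less_top)
  ultimately have Ile: "I \<le> 1" by (metis ennreal_leI ennreal_1)
  have Ilt: "I < \<top>" using Ile by (simp add: le_less_trans[of I 1 \<top>])
  show i: "integrable R (\<lambda>x. \<bar>f x\<bar> powr enn2real p)"
    by (rule integrableI_nonneg) (use assms(3) Ilt in \<open>auto simp: I_def[symmetric]\<close>)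
  have "ennreal (\<integral>x. \<bar>f x\<bar> powr enn2real p \<partial>R) = I"
    unfolding I_def by (rule nn_integral_eq_integral[symmetric]) (use i in auto)
  hence "ennreal (\<integral>x. \<bar>f x\<bar> powr enn2real p \<partial>R) \<le> 1" using Ile by simp
  thus "(\<integral>x. \<bar>f x\<bar> powr enn2real p \<partial>R) \<le> 1" by simp
qed




lemma ennreal_tendsto_0I:
  fixes x :: "nat \<Rightarrow> ennreal"
  assumes "\<And>e. e > 0 \<Longrightarrow> eventually (\<lambda>n. x n \<le> ennreal e) sequentially"
  shows "x \<longlonglongrightarrow> 0"
proof (rule order_tendstoI)
  fix a :: ennreal assume "a < 0" thus "eventually (\<lambda>n. a < x n) sequentially" by simp
next
  fix a :: ennreal assume a: "0 < a"
  show "eventually (\<lambda>n. x n < a) sequentially"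
  proof (cases "a = \<top>")
    case True
    show ?thesis using assms[of 1]
    proof (rule eventually_mono)
      fix n assume "x n \<le> ennreal 1"
      thus "x n < a" using True by (metis ennreal_less_top le_less_trans)
    qed simp
  next
    case False
    hence e: "0 < enn2real a" using a by (simp add: enn2real_positive_iff less_top)
    have "ennreal (enn2real a / 2) < a"
      using e False by (metis ennreal_enn2real ennreal_lessI half_gt_zero less_top field_sum_of_halves
          less_add_same_cancel1)
    thus ?thesis using assms[of "enn2real a / 2"] e
      by (auto elim!: eventually_mono intro: le_less_trans)
  qed
qed

lemma ennreal_tendsto_0D:
  fixes x :: "nat \<Rightarrow> ennreal"
  assumes "x \<longlonglongrightarrow> 0" "e > 0"
  shows "eventually (\<lambda>n. x n \<le> ennreal e) sequentially"
proof -
  have "eventually (\<lambda>n. x n < ennreal e) sequentially"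
    using order_tendstoD(2)[OF assms(1)] assms(2) by simp
  thus ?thesis by (auto elim!: eventually_mono)
qed

lemma powr_le_lin:
  assumes "(r::real) \<ge> 1" "\<bar>y\<bar> \<le> C"
  shows "\<bar>y\<bar> powr r \<le> C powr (r - 1) * \<bar>y\<bar>"
proof (cases "y = 0")
  case False
  have "\<bar>y\<bar> powr r = \<bar>y\<bar> powr (r - 1) * \<bar>y\<bar> powr 1"
    using powr_add[of "\<bar>y\<bar>" "r - 1" 1] by simp
  also have "\<dots> \<le> C powr (r - 1) * \<bar>y\<bar>"
    using False assms by (auto intro!: mult_right_mono powr_mono2)
  finally show ?thesis .
qed simp

lemma powr_le_one_plus:
  assumes "(a::real) \<ge> 0" "0 < s" "s \<le> t"
  shows "a powr s \<le> 1 + a powr t"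
proof (cases "a \<le> 1")
  case True
  hence "a powr s \<le> 1" using assms by (intro powr_le1) auto
  thus ?thesis using powr_ge_zero[of a t] by linarith
next
  case False
  hence "a powr s \<le> a powr t" using assms by (intro powr_mono) auto
  thus ?thesis by simp
qed

lemma sum_powr_ineq:
  assumes "(r::real) \<ge> 1"
  shows "\<bar>a + b\<bar> powr r \<le> 2 powr (r - 1) * (\<bar>a\<bar> powr r + \<bar>b\<bar> powr r)"
proof -
  have "\<bar>(1 - 1/2) *\<^sub>R a + (1/2) *\<^sub>R b\<bar> powr r \<le> (1 - 1/2) * \<bar>a\<bar> powr r + (1/2) * \<bar>b\<bar> powr r"
    by (rule convex_onD[OF convex_abs_powr[OF assms]]) auto
  hence "\<bar>(a + b) / 2\<bar> powr r \<le> (\<bar>a\<bar> powr r + \<bar>b\<bar> powr r) / 2"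
    by (simp add: field_simps)
  moreover have "\<bar>(a + b) / 2\<bar> powr r = \<bar>a + b\<bar> powr r / 2 powr r"
    by (simp add: powr_divide)
  ultimately have "\<bar>a + b\<bar> powr r \<le> 2 powr r * ((\<bar>a\<bar> powr r + \<bar>b\<bar> powr r) / 2)"
    by (simp add: divide_le_eq mult.commute)
  also have "2 powr r * ((\<bar>a\<bar> powr r + \<bar>b\<bar> powr r) / 2) = 2 powr (r - 1) * (\<bar>a\<bar> powr r + \<bar>b\<bar> powr r)"
    by (simp add: powr_diff)
  finally show ?thesis .
qed

lemma A1_pt:
  assumes "prob_space R" "subalgebra R F" "subalgebra R G" "1 \<le> q" "q < p"
    "f \<in> borel_measurable R" "\<forall>x\<in>space R. \<bar>f x\<bar> \<le> 1"
  shows "ennreal (\<integral>x. \<bar>cdiff R F G f x\<bar> \<partial>R) \<le> cond_exp_diff_opnorm R p q F G"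
proof -
  interpret prob_space R by fact
  have qi: "q \<noteq> \<infinity>" using assms(5) by auto
  define r where "r = enn2real q"
  have r1: "1 \<le> r" unfolding r_def using enn2real_mono[of 1 q] assms(4) qi
    by (simp add: less_top)
  have pr: "0 < enn2real p" if "p \<noteq> \<infinity>"
  proof -
    have "1 \<le> p" using assms(4,5) by simp
    hence "enn2real 1 \<le> enn2real p" using that by (intro enn2real_mono) (auto simp: less_top)
    thus ?thesis by simp
  qed
  have lp: "lp_norm R p f \<le> 1"
  proof (cases "p = \<infinity>")
    case True thus ?thesis using lp_inf_le1 assms(6,7) by simp
  next
    case False thus ?thesis using lp_fin_le1[OF assms(1) False pr[OF False] assms(6,7)] by simp
  qed
  have "lp_norm R q (cdiff R F G f) \<le> cond_exp_diff_opnorm R p q F G"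
    unfolding cond_exp_diff_opnorm_def
    by (rule SUP_upper2[where i=f]) (use assms(6) lp in \<open>auto simp: cdiff_def\<close>)
  moreover
  define h where "h = cdiff R F G f"
  have hm[measurable]: "h \<in> borel_measurable R" unfolding h_def by simp
  have hb: "AE x in R. \<bar>h x\<bar> \<le> 2"
    using cdiff_bound[OF assms(1-3,6), of 1] assms(7) unfolding h_def by auto
  have hi: "integrable R (\<lambda>x. \<bar>h x\<bar>)"
    by (rule integrable_const_bound[of _ 2]) (use hb in auto)
  have hri: "integrable R (\<lambda>x. \<bar>h x\<bar> powr r)"
  proof (rule integrable_const_bound[of _ "2 powr r"])
    show "AE x in R. norm (\<bar>h x\<bar> powr r) \<le> 2 powr r"
      using hb by eventually_elim (use r1 in \<open>auto intro: powr_mono2\<close>)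
  qed simp
  have "\<bar>expectation (\<lambda>x. \<bar>h x\<bar>)\<bar> powr r \<le> expectation (\<lambda>x. \<bar>\<bar>h x\<bar>\<bar> powr r)"
    by (rule jensens_inequality[where I=UNIV, OF hi _ _ _ convex_abs_powr[OF r1]]) (use hri in auto)
  hence J: "(\<integral>x. \<bar>h x\<bar> \<partial>R) powr r \<le> (\<integral>x. \<bar>h x\<bar> powr r \<partial>R)"
    by (simp add: integral_nonneg_AE)
  have eq: "(\<integral>x. \<bar>h x\<bar> \<partial>R) = ((\<integral>x. \<bar>h x\<bar> \<partial>R) powr r) powr (1 / r)"
    using r1 by (simp add: powr_powr integral_nonneg_AE)
  have le2: "((\<integral>x. \<bar>h x\<bar> \<partial>R) powr r) powr (1 / r) \<le> (\<integral>x. \<bar>h x\<bar> powr r \<partial>R) powr (1 / r)"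
    using J r1 by (intro powr_mono2) auto
  have le: "(\<integral>x. \<bar>h x\<bar> \<partial>R) \<le> (\<integral>x. \<bar>h x\<bar> powr r \<partial>R) powr (1 / r)"
    by (rule ord_eq_le_trans[OF eq le2])
  have "ennreal (\<integral>x. \<bar>h x\<bar> \<partial>R) \<le> lp_norm R q h"
    using lp_fin_eq[OF qi hri[unfolded r_def]] ennreal_leI[OF le] by (simp add: r_def)
  ultimately show ?thesis unfolding h_def by (rule order.trans[rotated])
qed

lemma A1:
  assumes "prob_space R" "\<And>n. subalgebra R (B n)" "1 \<le> q" "q < p"
    "(\<lambda>n. cond_exp_diff_opnorm R p q (B n) (B 0)) \<longlonglongrightarrow> 0"
  shows "(\<lambda>n. cb R (B n) (B 0)) \<longlonglongrightarrow> 0"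
proof (rule tendsto_sandwich[OF _ _ tendsto_const assms(5)])
  show "\<forall>\<^sub>F n in sequentially. cb R (B n) (B 0) \<le> cond_exp_diff_opnorm R p q (B n) (B 0)"
    unfolding cb_def
    by (intro always_eventually allI SUP_least) (auto intro: A1_pt[OF assms(1) assms(2) assms(2) assms(3,4)])
qed simp




lemma enn2real_less_strict:
  assumes "(q::ennreal) < p" "p \<noteq> \<infinity>"
  shows "enn2real q < enn2real p"
proof -
  have qt: "q < \<top>" using assms by (simp add: less_top[symmetric]) (metis assms(1) less_trans top.not_eq_extremum)
  have "ennreal (enn2real q) < ennreal (enn2real p)" using assms qt by (simp add: less_top)
  thus ?thesis by (simp add: ennreal_less_iff)
qed

lemma A2_pt:
  assumes "prob_space R" "subalgebra R F" "subalgebra R G" "1 \<le> q" "q < p"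
    "f \<in> borel_measurable R" "lp_norm R p f \<le> 1" "M \<ge> 1"
  shows "lp_norm R q (cdiff R F G f) \<le> ennreal ((2 powr (enn2real q - 1) * ((2*M) powr (enn2real q - 1) * M * enn2real (cb R F G)
           + (if p = \<infinity> then 0 else 2 powr enn2real q * M powr (enn2real q - enn2real p)))) powr (1 / enn2real q))"
proof -
  interpret prob_space R by fact
  interpret sF: sigma_finite_subalgebra R F using sfs assms by auto
  interpret sG: sigma_finite_subalgebra R G using sfs assms by auto
  note fm[measurable] = assms(6)
  have qi: "q \<noteq> \<infinity>" using assms(5) by auto
  define r where "r = enn2real q"
  have r1: "1 \<le> r" unfolding r_def using enn2real_mono[of 1 q] assms(4) qi
    by (simp add: less_top)
  define c where "c = enn2real (cb R F G)"
  have c0: "0 \<le> c" unfolding c_def by simp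
  define pr where "pr = enn2real p"
  define Bd where "Bd = 2 powr (r - 1) * ((2*M) powr (r-1) * M * c + (if p = \<infinity> then 0 else 2 powr r * M powr (r - pr)))"
  define h where "h = cdiff R F G f"
  have hm[measurable]: "h \<in> borel_measurable R" unfolding h_def by simp
  have pos1: "1 \<le> (2*M) powr (r-1) * M"
  proof -
    have "1 \<le> (2*M) powr (r-1)" using assms(8) r1 by (intro ge_one_powr_ge_zero) auto
    thus ?thesis using assms(8) by (metis mult_mono' one_le_numeral order.trans mult_1 zero_le_one)
  qed
  have main: "integrable R (\<lambda>x. \<bar>h x\<bar> powr r) \<and> (\<integral>x. \<bar>h x\<bar> powr r \<partial>R) \<le> Bd"
  proof (cases "p = \<infinity>")
    case True
    have ae1: "AE x in R. \<bar>f x\<bar> \<le> 1" using lp_inf_from[OF fm] assms(7) True by simp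
    define f' where "f' = (\<lambda>x. max (-1) (min 1 (f x)))"
    have f'm[measurable]: "f' \<in> borel_measurable R" unfolding f'_def by measurable
    have f'b: "\<forall>x\<in>space R. \<bar>f' x\<bar> \<le> 1" by (auto simp: f'_def)
    have aef: "AE x in R. f x = f' x" using ae1 by eventually_elim (auto simp: f'_def)
    have aeh: "AE x in R. h x = cdiff R F G f' x"
      using sF.real_cond_exp_cong[OF aef fm f'm] sG.real_cond_exp_cong[OF aef fm f'm]
      by eventually_elim (simp add: h_def cdiff_def)
    have b2: "AE x in R. \<bar>cdiff R F G f' x\<bar> \<le> 2"
      using cdiff_bound[OF assms(1-3) f'm, of 1] f'b by auto
    have hb: "AE x in R. \<bar>h x\<bar> powr r \<le> 2 powr (r - 1) * \<bar>cdiff R F G f' x\<bar>"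
      using aeh b2 by eventually_elim (use r1 in \<open>auto intro: powr_le_lin\<close>)
    have hri: "integrable R (\<lambda>x. \<bar>h x\<bar> powr r)"
    proof (rule integrable_const_bound[of _ "2 powr r"])
      show "AE x in R. norm (\<bar>h x\<bar> powr r) \<le> 2 powr r"
        using aeh b2 by eventually_elim (use r1 in \<open>auto intro: powr_mono2\<close>)
    qed simp
    have ci: "integrable R (\<lambda>x. \<bar>cdiff R F G f' x\<bar>)"
      by (rule integrable_const_bound[of _ 2]) (use b2 in auto)
    have "(\<integral>x. \<bar>h x\<bar> powr r \<partial>R) \<le> (\<integral>x. 2 powr (r - 1) * \<bar>cdiff R F G f' x\<bar> \<partial>R)"
      by (rule integral_mono_AE[OF hri _ hb]) (use ci in simp)
    also have "\<dots> = 2 powr (r - 1) * (\<integral>x. \<bar>cdiff R F G f' x\<bar> \<partial>R)" by simp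
    also have "\<dots> \<le> 2 powr (r - 1) * (1 * c)"
      unfolding c_def by (intro mult_left_mono cb_use[OF assms(1-3) f'm f'b]) auto
    also have "\<dots> \<le> Bd" unfolding Bd_def
    proof (intro mult_left_mono)
      have "1 * c \<le> (2*M) powr (r-1) * M * c" using pos1 c0 by (intro mult_right_mono) auto
      moreover have "0 \<le> (if p = \<infinity> then 0 else 2 powr r * M powr (r - pr))" by simp
      ultimately show "1 * c \<le> (2*M) powr (r-1) * M * c + (if p = \<infinity> then 0 else 2 powr r * M powr (r - pr))" by linarith
    qed simp
    finally show ?thesis using hri by simp
  next
    case False
    have rp: "r < pr" unfolding r_def pr_def by (rule enn2real_less_strict[OF assms(5) False])
    have pr0: "0 < pr" using rp r1 by simp
    have fpi: "integrable R (\<lambda>x. \<bar>f x\<bar> powr pr)" and fp1: "(\<integral>x. \<bar>f x\<bar> powr pr \<partial>R) \<le> 1"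
      using lp_fin_from[OF False pr0[unfolded pr_def] fm assms(7)] unfolding pr_def by auto
    have fi: "integrable R f"
    proof (rule Bochner_Integration.integrable_bound[OF Bochner_Integration.integrable_add[OF integrable_const[of 1] fpi] fm])
      show "AE x in R. norm (f x) \<le> norm (1 + \<bar>f x\<bar> powr pr)"
        using powr_le_one_plus[of "\<bar>f _\<bar>" 1 pr] rp r1 by auto
    qed
    define fs where "fs = (\<lambda>x. max (-M) (min M (f x)))"
    define fb where "fb = (\<lambda>x. f x - fs x)"
    have fsm[measurable]: "fs \<in> borel_measurable R" unfolding fs_def by measurable
    have fbm[measurable]: "fb \<in> borel_measurable R" unfolding fb_def by measurable
    have fsb: "\<forall>x\<in>space R. \<bar>fs x\<bar> \<le> M" using assms(8) by (auto simp: fs_def)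
    have fsi: "integrable R fs" by (rule integrable_const_bound[of _ M]) (use fsb in auto)
    have fbi: "integrable R fb" unfolding fb_def using fi fsi by auto
    have fbp: "\<bar>fb x\<bar> powr r \<le> M powr (r - pr) * \<bar>f x\<bar> powr pr" for x
    proof (cases "\<bar>f x\<bar> \<le> M")
      case True
      hence "fb x = 0" by (auto simp: fb_def fs_def)
      thus ?thesis by simp
    next
      case False
      have le: "\<bar>fb x\<bar> \<le> \<bar>f x\<bar>" using assms(8) by (auto simp: fb_def fs_def)
      have fx0: "0 < \<bar>f x\<bar>" using False assms(8) by linarith
      have "\<bar>fb x\<bar> powr r \<le> \<bar>f x\<bar> powr r" using le r1 by (intro powr_mono2) auto
      also have "\<dots> = \<bar>f x\<bar> powr (r - pr) * \<bar>f x\<bar> powr pr"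
        using powr_add[of "\<bar>f x\<bar>" "r - pr" pr] by simp
      also have "\<dots> \<le> M powr (r - pr) * \<bar>f x\<bar> powr pr"
        using False assms(8) rp by (intro mult_right_mono powr_mono2') auto
      finally show ?thesis .
    qed
    have fbri: "integrable R (\<lambda>x. \<bar>fb x\<bar> powr r)"
      by (rule Bochner_Integration.integrable_bound[OF integrable_mult_right[OF fpi, of "M powr (r - pr)"]])
         (use fbp in auto)
    have fbr: "(\<integral>x. \<bar>fb x\<bar> powr r \<partial>R) \<le> M powr (r - pr)"
    proof -
      have "(\<integral>x. \<bar>fb x\<bar> powr r \<partial>R) \<le> (\<integral>x. M powr (r - pr) * \<bar>f x\<bar> powr pr \<partial>R)"
        by (rule integral_mono[OF fbri]) (use fpi fbp in auto)
      also have "\<dots> = M powr (r - pr) * (\<integral>x. \<bar>f x\<bar> powr pr \<partial>R)" by simp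
      also have "\<dots> \<le> M powr (r - pr) * 1" using fp1 by (intro mult_left_mono) auto
      finally show ?thesis by simp
    qed
    have phim: "(\<lambda>x::real. \<bar>x\<bar> powr r) \<in> borel_measurable borel" by measurable
    have eF: "integrable R (\<lambda>x. \<bar>real_cond_exp R F fb x\<bar> powr r)"
      "(\<integral>x. \<bar>real_cond_exp R F fb x\<bar> powr r \<partial>R) \<le> (\<integral>x. \<bar>fb x\<bar> powr r \<partial>R)"
      using ce_convex_int[OF assms(1,2) fbi fbri convex_abs_powr[OF r1] phim] by auto
    have eG: "integrable R (\<lambda>x. \<bar>real_cond_exp R G fb x\<bar> powr r)"
      "(\<integral>x. \<bar>real_cond_exp R G fb x\<bar> powr r \<partial>R) \<le> (\<integral>x. \<bar>fb x\<bar> powr r \<partial>R)"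
      using ce_convex_int[OF assms(1,3) fbi fbri convex_abs_powr[OF r1] phim] by auto
    have feq: "f = (\<lambda>x. fs x + fb x)" by (auto simp: fb_def)
    have aeh: "AE x in R. h x = cdiff R F G fs x + (real_cond_exp R F fb x - real_cond_exp R G fb x)"
      using sF.real_cond_exp_add[OF fsi fbi] sG.real_cond_exp_add[OF fsi fbi]
      by eventually_elim (simp add: h_def cdiff_def feq[symmetric])
    have sb: "AE x in R. \<bar>cdiff R F G fs x\<bar> \<le> 2 * M"
      using cdiff_bound[OF assms(1-3) fsm, of M] fsb by auto
    define g where "g = (\<lambda>x. 2 powr (r - 1) * ((2*M) powr (r-1) * \<bar>cdiff R F G fs x\<bar> +
        2 powr (r - 1) * (\<bar>real_cond_exp R F fb x\<bar> powr r + \<bar>real_cond_exp R G fb x\<bar> powr r)))"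
    have si: "integrable R (\<lambda>x. \<bar>cdiff R F G fs x\<bar>)"
      by (rule integrable_const_bound[of _ "2*M"]) (use sb in auto)
    have gi: "integrable R g" unfolding g_def using si eF(1) eG(1) by auto
    have hg: "AE x in R. \<bar>h x\<bar> powr r \<le> g x"
      using aeh sb
    proof eventually_elim
      case (elim x)
      define a where "a = cdiff R F G fs x"
      define b1 where "b1 = real_cond_exp R F fb x"
      define b2 where "b2 = real_cond_exp R G fb x"
      have "\<bar>h x\<bar> powr r = \<bar>a + (b1 + (- b2))\<bar> powr r" using elim by (simp add: a_def b1_def b2_def)
      also have "\<dots> \<le> 2 powr (r - 1) * (\<bar>a\<bar> powr r + \<bar>b1 + (- b2)\<bar> powr r)"
        by (rule sum_powr_ineq[OF r1])
      also have "\<dots> \<le> 2 powr (r - 1) * ((2*M) powr (r-1) * \<bar>a\<bar> + 2 powr (r - 1) * (\<bar>b1\<bar> powr r + \<bar>b2\<bar> powr r))"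
      proof (intro mult_left_mono add_mono)
        show "\<bar>a\<bar> powr r \<le> (2 * M) powr (r - 1) * \<bar>a\<bar>" using elim r1 by (intro powr_le_lin) (auto simp: a_def)
        show "\<bar>b1 + - b2\<bar> powr r \<le> 2 powr (r - 1) * (\<bar>b1\<bar> powr r + \<bar>b2\<bar> powr r)"
          using sum_powr_ineq[OF r1, of b1 "-b2"] by simp
      qed simp
      finally show ?case by (simp add: g_def a_def b1_def b2_def)
    qed
    have g0: "\<And>x. 0 \<le> g x" unfolding g_def by (auto intro!: mult_nonneg_nonneg add_nonneg_nonneg)
    have hri: "integrable R (\<lambda>x. \<bar>h x\<bar> powr r)"
      by (rule Bochner_Integration.integrable_bound[OF gi]) (use hg g0 in auto)
    have "(\<integral>x. \<bar>h x\<bar> powr r \<partial>R) \<le> (\<integral>x. g x \<partial>R)" by (rule integral_mono_AE[OF hri gi hg])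
    also have "(\<integral>x. g x \<partial>R) = 2 powr (r - 1) * ((2*M) powr (r-1) * (\<integral>x. \<bar>cdiff R F G fs x\<bar> \<partial>R) +
        2 powr (r - 1) * ((\<integral>x. \<bar>real_cond_exp R F fb x\<bar> powr r \<partial>R) + (\<integral>x. \<bar>real_cond_exp R G fb x\<bar> powr r \<partial>R)))"
      unfolding g_def using si eF(1) eG(1) by simp
    also have "\<dots> \<le> 2 powr (r - 1) * ((2*M) powr (r-1) * (M * c) + 2 powr (r - 1) * (M powr (r - pr) + M powr (r - pr)))"
    proof (intro mult_left_mono add_mono)
      show "(\<integral>x. \<bar>cdiff R F G fs x\<bar> \<partial>R) \<le> M * c" unfolding c_def
        by (rule cb_use[OF assms(1-3) fsm fsb]) (use assms(8) in simp)
      show "(\<integral>x. \<bar>real_cond_exp R F fb x\<bar> powr r \<partial>R) \<le> M powr (r - pr)" using eF(2) fbr by simp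
      show "(\<integral>x. \<bar>real_cond_exp R G fb x\<bar> powr r \<partial>R) \<le> M powr (r - pr)" using eG(2) fbr by simp
    qed auto
    also have "\<dots> = Bd" unfolding Bd_def
    proof -
      have "2 powr (r - 1) * (M powr (r - pr) + M powr (r - pr)) = 2 powr r * M powr (r - pr)"
        using powr_add[of 2 "r - 1" 1] by simp
      thus "2 powr (r - 1) * ((2*M) powr (r-1) * (M * c) + 2 powr (r - 1) * (M powr (r - pr) + M powr (r - pr))) =
        2 powr (r - 1) * ((2*M) powr (r-1) * M * c + (if p = \<infinity> then 0 else 2 powr r * M powr (r - pr)))"
        using False by (simp add: mult.assoc)
    qed
    finally show ?thesis using hri by simp
  qed
  have "lp_norm R q h \<le> ennreal (Bd powr (1 / enn2real q))"
    by (rule lp_fin_le[OF qi]) (use main r1 in \<open>auto simp: r_def\<close>)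
  thus ?thesis unfolding h_def Bd_def r_def c_def pr_def .
qed

lemma A2:
  assumes "prob_space R" "\<And>n. subalgebra R (B n)" "1 \<le> q" "q < p"
    "(\<lambda>n. cb R (B n) (B 0)) \<longlonglongrightarrow> 0"
  shows "(\<lambda>n. cond_exp_diff_opnorm R p q (B n) (B 0)) \<longlonglongrightarrow> 0"
proof (rule ennreal_tendsto_0I)
  fix e :: real assume e: "0 < e"
  have qi: "q \<noteq> \<infinity>" using assms(4) by auto
  define r where "r = enn2real q"
  have r1: "1 \<le> r" unfolding r_def using enn2real_mono[of 1 q] assms(3) qi
    by (simp add: less_top)
  define pr where "pr = enn2real p"
  define c where "c = (\<lambda>n. enn2real (cb R (B n) (B 0)))"
  have c0: "c \<longlonglongrightarrow> 0" unfolding c_def using tendsto_enn2real[of _ 0] assms(5) by simp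
  define T where "T = (\<lambda>M::real. if p = \<infinity> then 0 else 2 powr r * M powr (r - pr))"
  define E where "E = e powr r"
  have E0: "0 < E" using e by (simp add: E_def)
  have T0: "((\<lambda>M. 2 powr (r - 1) * T M) \<longlongrightarrow> 0) at_top"
  proof (cases "p = \<infinity>")
    case True thus ?thesis by (simp add: T_def)
  next
    case False
    have "r < pr" unfolding r_def pr_def by (rule enn2real_less_strict[OF assms(4) False])
    hence "((\<lambda>M::real. M powr (r - pr)) \<longlongrightarrow> 0) at_top"
      by (intro tendsto_neg_powr filterlim_ident) auto
    hence "((\<lambda>M. 2 powr (r - 1) * (2 powr r * M powr (r - pr))) \<longlongrightarrow> 2 powr (r - 1) * (2 powr r * 0)) at_top"
      by (intro tendsto_mult tendsto_const)
    thus ?thesis using False by (simp add: T_def)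
  qed
  have "eventually (\<lambda>M. 2 powr (r - 1) * T M < E / 2 \<and> 1 \<le> M) at_top"
    using order_tendstoD(2)[OF T0, of "E/2"] E0 eventually_ge_at_top[of "1::real"]
    by (simp add: eventually_conj_iff)
  then obtain M where M: "2 powr (r - 1) * T M < E / 2" "1 \<le> M"
    by (metis (lifting) eventually_at_top_linorder order.refl)
  define K where "K = 2 powr (r - 1) * ((2*M) powr (r-1) * M)"
  have "(\<lambda>n. K * c n) \<longlonglongrightarrow> K * 0" by (intro tendsto_mult tendsto_const c0)
  hence ev: "eventually (\<lambda>n. K * c n < E / 2) sequentially"
    using order_tendstoD(2)[of "\<lambda>n. K * c n" 0 sequentially "E/2"] E0 by simp
  show "eventually (\<lambda>n. cond_exp_diff_opnorm R p q (B n) (B 0) \<le> ennreal e) sequentially"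
    using ev
  proof (rule eventually_mono)
    fix n assume n: "K * c n < E / 2"
    define base where "base = 2 powr (r - 1) * ((2*M) powr (r - 1) * M * c n + T M)"
    have base_eq: "base = K * c n + 2 powr (r - 1) * T M"
      unfolding base_def K_def by (simp add: algebra_simps)
    have b0: "0 \<le> base" unfolding base_def T_def c_def using M(2) by auto
    have "base < E" using n M(1) base_eq by simp
    hence "base powr (1 / r) \<le> E powr (1 / r)" using b0 r1 by (intro powr_mono2) auto
    also have "E powr (1 / r) = e" unfolding E_def using e r1 by (simp add: powr_powr)
    finally have bl: "base powr (1 / r) \<le> e" .
    have "cond_exp_diff_opnorm R p q (B n) (B 0) \<le> ennreal (base powr (1 / r))"
      unfolding cond_exp_diff_opnorm_def
    proof (rule SUP_least)
      fix f assume f: "f \<in> {f \<in> borel_measurable R. lp_norm R p f \<le> 1}"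
      have "lp_norm R q (cdiff R (B n) (B 0) f) \<le> ennreal (base powr (1 / r))"
        using A2_pt[OF assms(1,2,2,3,4), of f M n 0] f M(2)
        unfolding base_def T_def c_def r_def pr_def by auto
      thus "lp_norm R q (\<lambda>x. real_cond_exp R (B n) f x - real_cond_exp R (B 0) f x) \<le> ennreal (base powr (1 / r))"
        by (simp add: cdiff_def)
    qed
    also have "\<dots> \<le> ennreal e" using bl by (rule ennreal_leI)
    finally show "cond_exp_diff_opnorm R p q (B n) (B 0) \<le> ennreal e" .
  qed
qed




locale dens =
  fixes P :: "'a measure" and Z :: "'a \<Rightarrow> real"
  assumes prob: "prob_space P"
    and Zm[measurable]: "Z \<in> borel_measurable P"
    and Z0: "\<And>x. 0 \<le> Z x"
    and Zi: "integrable P Z"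
    and Qprob: "prob_space (density P (\<lambda>x. ennreal (Z x)))"
begin

abbreviation "Q \<equiv> density P (\<lambda>x. ennreal (Z x))"

sublocale P: prob_space P by (rule prob)
sublocale Q: prob_space Q by (rule Qprob)

lemma AE_PQ: "AE x in P. R x \<Longrightarrow> AE x in Q. R x"
  by (subst AE_density) (auto elim: eventually_mono)

lemma intQ: "g \<in> borel_measurable P \<Longrightarrow> (\<integral>x. g x \<partial>Q) = (\<integral>x. Z x * g x \<partial>P)"
  by (subst integral_density) (auto simp: Z0)

lemma intQ_iff: "g \<in> borel_measurable P \<Longrightarrow> integrable Q g \<longleftrightarrow> integrable P (\<lambda>x. Z x * g x)"
  by (subst integrable_density) (auto simp: Z0)

lemma subQ: "subalgebra P F \<Longrightarrow> subalgebra Q F"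
  by (simp add: subalgebra_def)

lemma ND_bound:
  assumes F: "subalgebra P F" and fm[measurable]: "f \<in> borel_measurable P"
    and fb: "\<forall>x\<in>space P. \<bar>f x\<bar> \<le> 1"
  shows "AE x in P. \<bar>real_cond_exp P F (\<lambda>x. Z x * f x) x\<bar> \<le> real_cond_exp P F Z x"
proof -
  interpret sigma_finite_subalgebra P F using sfs[OF prob F] .
  have zfi: "integrable P (\<lambda>x. Z x * f x)"
    by (rule Bochner_Integration.integrable_bound[OF Zi]) (use fb Z0 in \<open>auto simp: abs_mult intro!: mult_left_le\<close>)
  have mzi: "integrable P (\<lambda>x. - Z x)" using Zi by simp
  have "AE x in P. real_cond_exp P F (\<lambda>x. Z x * f x) x \<le> real_cond_exp P F Z x"
    by (rule real_cond_exp_mono[OF _ zfi Zi]) (use fb Z0 in \<open>auto intro!: mult_left_le simp: abs_le_iff\<close>)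
  moreover have "AE x in P. real_cond_exp P F (\<lambda>x. - Z x) x \<le> real_cond_exp P F (\<lambda>x. Z x * f x) x"
  proof (rule real_cond_exp_mono[OF _ mzi zfi], rule AE_I2)
    fix x assume "x \<in> space P"
    hence "-1 \<le> f x" using fb by auto
    hence "Z x * (-1) \<le> Z x * f x" using Z0 by (rule mult_left_mono)
    thus "- Z x \<le> Z x * f x" by simp
  qed
  moreover have "AE x in P. real_cond_exp P F (\<lambda>x. (-1) * Z x) x = (-1) * real_cond_exp P F Z x"
    by (rule real_cond_exp_cmult[OF Zi])
  ultimately show ?thesis by eventually_elim auto
qed

lemma D_nonneg:
  assumes F: "subalgebra P F"
  shows "AE x in P. 0 \<le> real_cond_exp P F Z x"
proof -
  interpret sigma_finite_subalgebra P F using sfs[OF prob F] .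
  show ?thesis by (rule real_cond_exp_pos) (auto simp: Z0)
qed

lemma bayes:
  assumes F: "subalgebra P F" and fm[measurable]: "f \<in> borel_measurable P"
    and fb: "\<forall>x\<in>space P. \<bar>f x\<bar> \<le> 1"
  shows "AE x in Q. real_cond_exp Q F f x =
           real_cond_exp P F (\<lambda>x. Z x * f x) x / real_cond_exp P F Z x"
proof -
  interpret sP: sigma_finite_subalgebra P F using sfs[OF prob F] .
  interpret sQ: sigma_finite_subalgebra Q F using sfs[OF Qprob subQ[OF F]] .
  define N where "N = real_cond_exp P F (\<lambda>x. Z x * f x)"
  define D where "D = real_cond_exp P F Z"
  define g where "g = (\<lambda>x. N x / D x)"
  have NF[measurable]: "N \<in> borel_measurable F" unfolding N_def by simp
  have DF[measurable]: "D \<in> borel_measurable F" unfolding D_def by simp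
  have gF[measurable]: "g \<in> borel_measurable F" unfolding g_def by measurable
  have gP[measurable]: "g \<in> borel_measurable P" by (rule measurable_from_subalg[OF F gF])
  have NP[measurable]: "N \<in> borel_measurable P" by (rule measurable_from_subalg[OF F NF])
  have DP[measurable]: "D \<in> borel_measurable P" by (rule measurable_from_subalg[OF F DF])
  have ND: "AE x in P. \<bar>N x\<bar> \<le> D x" unfolding N_def D_def by (rule ND_bound[OF F fm fb])
  have gb: "AE x in P. \<bar>g x\<bar> \<le> 1"
    using ND by eventually_elim (auto simp: g_def abs_div divide_le_eq_1)
  have gN: "AE x in P. g x * D x = N x"
    using ND by eventually_elim (auto simp: g_def)
  have zfi: "integrable P (\<lambda>x. Z x * f x)"
    by (rule Bochner_Integration.integrable_bound[OF Zi]) (use fb Z0 in \<open>auto simp: abs_mult intro!: mult_left_le\<close>)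
  have "AE x in Q. real_cond_exp Q F f x = g x"
  proof (rule sQ.real_cond_exp_charact)
    show "integrable Q f" by (rule Q.integrable_const_bound[of _ 1]) (use fb in auto)
    show "integrable Q g" by (rule Q.integrable_const_bound[of _ 1]) (use AE_PQ[OF gb] in auto)
    show "g \<in> borel_measurable F" by (rule gF)
    fix A assume A: "A \<in> sets F"
    have AP[measurable]: "A \<in> sets P" using A F by (auto simp: subalgebra_def)
    have "(\<integral>x\<in>A. f x \<partial>Q) = (\<integral>x. Z x * (indicator A x * f x) \<partial>P)"
      unfolding set_lebesgue_integral_def by (subst intQ) auto
    also have "\<dots> = (\<integral>x\<in>A. Z x * f x \<partial>P)"
      unfolding set_lebesgue_integral_def by (intro Bochner_Integration.integral_cong) (auto simp: indicator_def)
    also have "\<dots> = (\<integral>x\<in>A. N x \<partial>P)" unfolding N_def by (rule sP.real_cond_exp_intA[OF zfi A])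
    finally have e1: "(\<integral>x\<in>A. f x \<partial>Q) = (\<integral>x\<in>A. N x \<partial>P)" .
    have iAg: "integrable P (\<lambda>x. (indicator A x * g x) * Z x)"
      by (rule Bochner_Integration.integrable_bound[OF Zi])
         (use gb Z0 in \<open>auto simp: abs_mult indicator_def elim!: eventually_mono intro!: mult_left_le_one_le\<close>)
    have "(\<integral>x\<in>A. g x \<partial>Q) = (\<integral>x. (indicator A x * g x) * Z x \<partial>P)"
      unfolding set_lebesgue_integral_def by (subst intQ) (auto simp: mult_ac)
    also have "\<dots> = (\<integral>x. (indicator A x * g x) * D x \<partial>P)"
      unfolding D_def by (rule sP.real_cond_exp_intg(2)[symmetric]) (use iAg A in auto)
    also have "\<dots> = (\<integral>x\<in>A. N x \<partial>P)"
      unfolding set_lebesgue_integral_def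
      by (rule integral_cong_AE) (use gN in \<open>auto elim!: eventually_mono simp: indicator_def\<close>)
    finally show "(\<integral>x\<in>A. f x \<partial>Q) = (\<integral>x\<in>A. g x \<partial>Q)" using e1 by simp
  qed
  thus ?thesis by (simp add: g_def N_def D_def)
qed

lemma D_pos:
  assumes F: "subalgebra P F"
  shows "AE x in Q. 0 < real_cond_exp P F Z x"
proof -
  interpret sP: sigma_finite_subalgebra P F using sfs[OF prob F] .
  define D where "D = real_cond_exp P F Z"
  have DF[measurable]: "D \<in> borel_measurable F" unfolding D_def by simp
  define A where "A = {x \<in> space P. D x \<le> 0}"
  have "{x \<in> space F. D x \<le> 0} \<in> sets F" by measurable
  moreover have "space F = space P" using F by (simp add: subalgebra_def)
  ultimately have AF: "A \<in> sets F" unfolding A_def by simp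
  have AP[measurable]: "A \<in> sets P" using AF F by (auto simp: subalgebra_def)
  have "(\<integral>x\<in>A. Z x \<partial>P) = (\<integral>x\<in>A. D x \<partial>P)" unfolding D_def by (rule sP.real_cond_exp_intA[OF Zi AF])
  also have "\<dots> \<le> 0"
  proof -
    have "0 \<le> (\<integral>x. - (indicator A x *\<^sub>R D x) \<partial>P)"
      by (rule integral_nonneg_AE) (auto simp: A_def indicator_def)
    thus ?thesis unfolding set_lebesgue_integral_def by simp
  qed
  finally have le0: "(\<integral>x. indicator A x * Z x \<partial>P) \<le> 0" by (simp add: set_lebesgue_integral_def)
  have iZ: "integrable P (\<lambda>x. indicator A x * Z x)"
    by (rule Bochner_Integration.integrable_bound[OF Zi]) (auto simp: indicator_def Z0)
  have "(\<integral>x. indicator A x * Z x \<partial>P) = 0"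
  proof -
    have "0 \<le> (\<integral>x. indicator A x * Z x \<partial>P)" by (rule integral_nonneg_AE) (simp add: Z0)
    thus ?thesis using le0 by linarith
  qed
  hence "AE x in P. indicator A x * Z x = 0"
    using integral_nonneg_eq_0_iff_AE[OF iZ] by (simp add: Z0)
  hence "AE x in P. x \<in> A \<longrightarrow> ennreal (Z x) = 0"
    by (auto elim!: eventually_mono simp: indicator_def)
  hence "A \<in> null_sets Q" by (subst null_sets_density_iff) auto
  hence "AE x in Q. x \<notin> A" by (rule AE_not_in)
  thus ?thesis using AE_space[of Q] unfolding A_def D_def by eventually_elim auto
qed

end



lemma ptw:
  fixes a b u v d :: real
  assumes ab: "\<bar>a\<bar> \<le> u" "\<bar>b\<bar> \<le> v" and v: "0 < v" and d: "0 < d"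
  shows "\<bar>a/u - b/v\<bar> \<le> 4 * min 1 ((\<bar>a - b\<bar> + \<bar>u - v\<bar>)/d) + 2 * (if v < 2*d then 1 else 0)"
proof -
  define Y where "Y = \<bar>a - b\<bar> + \<bar>u - v\<bar>"
  have au: "\<bar>a/u\<bar> \<le> 1"
  proof (cases "u = 0")
    case False
    hence "0 < u" using ab by linarith
    thus ?thesis using ab by (simp add: abs_div)
  qed simp
  have bv: "\<bar>b/v\<bar> \<le> 1" using ab v by (simp add: abs_div)
  have l2: "\<bar>a/u - b/v\<bar> \<le> 2" using au bv by linarith
  have Y0: "0 \<le> Y" unfolding Y_def by simp
  show ?thesis
  proof (cases "v < 2*d")
    case True
    have "0 \<le> 4 * min 1 ((\<bar>a - b\<bar> + \<bar>u - v\<bar>)/d)" using d by simp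
    thus ?thesis using True l2 by simp
  next
    case v2: False
    show ?thesis
    proof (cases "d \<le> Y")
      case True
      hence "min 1 ((\<bar>a - b\<bar> + \<bar>u - v\<bar>)/d) = 1" using d by (simp add: Y_def)
      thus ?thesis using l2 by simp
    next
      case False
      hence Yd: "Y < d" by simp
      have uv: "\<bar>u - v\<bar> < d" using Yd unfolding Y_def by simp
      have u: "d < u" using uv v2 by linarith
      have "a/u - b/v = (a - b)/u + (b/v) * (v - u)/u" using u v d by (simp add: field_simps)
      hence "\<bar>a/u - b/v\<bar> \<le> \<bar>(a - b)/u\<bar> + \<bar>(b/v) * (v - u)/u\<bar>"
        using abs_triangle_ineq[of "(a - b)/u" "(b/v) * (v - u)/u"] by simp
      also have "\<dots> = \<bar>a - b\<bar>/u + \<bar>b/v\<bar> * \<bar>v - u\<bar>/u"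
        using u d by (simp add: abs_div abs_mult)
      also have "\<dots> \<le> \<bar>a - b\<bar>/u + \<bar>v - u\<bar>/u"
        using bv u d by (intro add_left_mono divide_right_mono mult_left_le_one_le) auto
      also have "\<dots> = Y/u" unfolding Y_def by (simp add: add_divide_distrib abs_minus_commute)
      also have "\<dots> \<le> Y/d" using u d Y0 by (intro divide_left_mono) auto
      also have "\<dots> = min 1 (Y/d)" using Yd d by simp
      finally have h: "\<bar>a/u - b/v\<bar> \<le> min 1 (Y/d)" .
      have "0 \<le> min 1 (Y/d)" using Y0 d by simp
      hence "\<bar>a/u - b/v\<bar> \<le> 4 * min 1 ((\<bar>a - b\<bar> + \<bar>u - v\<bar>)/d)" using h unfolding Y_def by linarith
      thus ?thesis using v2 by simp
    qed
  qed
qed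

lemma ptw2:
  fixes z w K :: real
  assumes "0 \<le> z" "0 \<le> w" "w \<le> 4" "0 < K"
  shows "z * w \<le> 2*K*w + 8*(z - min z K)"
proof (cases "z \<le> 2*K")
  case True
  hence "z * w \<le> 2*K*w" using assms by (intro mult_right_mono) auto
  hence "z * w + 0 \<le> 2*K*w + 8*(z - min z K)" by (rule add_mono) simp
  thus ?thesis by simp
next
  case False
  hence "K \<le> z" using assms(4) by linarith
  hence mk: "min z K = K" by simp
  have zw: "z * w \<le> z * 4" using assms by (intro mult_left_mono) auto
  have kw: "0 \<le> 2*K*w" using assms by simp
  have "z * 4 \<le> 8 * (z - K)" using False by (simp add: algebra_simps)
  hence "z * w \<le> 8 * (z - min z K)" using zw mk by simp
  thus ?thesis using kw by linarith
qed

context dens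
begin

definition tK :: "real \<Rightarrow> real" where "tK K = (\<integral>x. Z x - min (Z x) K \<partial>P)"

lemma tK_int: "0 \<le> K \<Longrightarrow> integrable P (\<lambda>x. Z x - min (Z x) K)"
  by (rule Bochner_Integration.integrable_bound[OF Zi]) (auto simp: Z0)

lemma LY:
  assumes F: "subalgebra P F" and G: "subalgebra P G"
    and gm[measurable]: "g \<in> borel_measurable P" and gb: "\<forall>x\<in>space P. \<bar>g x\<bar> \<le> 1" and K: "0 < K"
  shows "(\<integral>x. \<bar>cdiff P F G (\<lambda>x. Z x * g x) x\<bar> \<partial>P) \<le> K * enn2real (cb P F G) + 2 * tK K"
proof -
  interpret sF: sigma_finite_subalgebra P F using sfs[OF prob F] .
  interpret sG: sigma_finite_subalgebra P G using sfs[OF prob G] .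
  define a where "a = (\<lambda>x. min (Z x) K * g x)"
  define b where "b = (\<lambda>x. (Z x - min (Z x) K) * g x)"
  have am[measurable]: "a \<in> borel_measurable P" unfolding a_def by measurable
  have bm[measurable]: "b \<in> borel_measurable P" unfolding b_def by measurable
  have ab: "\<forall>x\<in>space P. \<bar>a x\<bar> \<le> K"
  proof
    fix x assume "x \<in> space P"
    hence "\<bar>g x\<bar> \<le> 1" using gb by auto
    moreover have "\<bar>min (Z x) K\<bar> \<le> K" using Z0[of x] K by auto
    ultimately have "\<bar>min (Z x) K\<bar> * \<bar>g x\<bar> \<le> K * 1" by (intro mult_mono) auto
    thus "\<bar>a x\<bar> \<le> K" by (simp add: a_def abs_mult)
  qed
  have bb: "\<bar>b x\<bar> \<le> Z x - min (Z x) K" if "x \<in> space P" for x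
  proof -
    have "\<bar>g x\<bar> \<le> 1" using gb that by auto
    hence "\<bar>Z x - min (Z x) K\<bar> * \<bar>g x\<bar> \<le> \<bar>Z x - min (Z x) K\<bar> * 1" by (intro mult_left_mono) auto
    thus ?thesis by (simp add: b_def abs_mult)
  qed
  have ai: "integrable P a" by (rule P.integrable_const_bound[of _ K]) (use ab in auto)
  have bi: "integrable P b" by (rule Bochner_Integration.integrable_bound[OF tK_int[OF less_imp_le[OF K]]]) (use bb in auto)
  have zgi: "integrable P (\<lambda>x. Z x * g x)"
    by (rule Bochner_Integration.integrable_bound[OF Zi]) (use gb Z0 in \<open>auto simp: abs_mult intro!: mult_left_le\<close>)
  have eq: "(\<lambda>x. Z x * g x) = (\<lambda>x. a x + b x)" by (auto simp: a_def b_def algebra_simps)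
  have dec: "AE x in P. cdiff P F G (\<lambda>x. Z x * g x) x = cdiff P F G a x + cdiff P F G b x"
    using sF.real_cond_exp_add[OF ai bi] sG.real_cond_exp_add[OF ai bi]
    by eventually_elim (simp add: cdiff_def eq)
  have cab: "AE x in P. \<bar>cdiff P F G a x\<bar> \<le> 2 * K" using cdiff_bound[OF prob F G am, of K] ab by auto
  have cai: "integrable P (\<lambda>x. \<bar>cdiff P F G a x\<bar>)"
    by (rule P.integrable_const_bound[of _ "2*K"]) (use cab in auto)
  have cbi: "integrable P (\<lambda>x. \<bar>cdiff P F G b x\<bar>)" unfolding cdiff_def
    using sF.real_cond_exp_int(1)[OF bi] sG.real_cond_exp_int(1)[OF bi] by auto
  have czi: "integrable P (\<lambda>x. \<bar>cdiff P F G (\<lambda>x. Z x * g x) x\<bar>)" unfolding cdiff_def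
    using sF.real_cond_exp_int(1)[OF zgi] sG.real_cond_exp_int(1)[OF zgi] by auto
  have "(\<integral>x. \<bar>cdiff P F G (\<lambda>x. Z x * g x) x\<bar> \<partial>P) \<le>
        (\<integral>x. \<bar>cdiff P F G a x\<bar> + \<bar>cdiff P F G b x\<bar> \<partial>P)"
    by (rule integral_mono_AE[OF czi]) (use cai cbi dec in \<open>auto elim!: eventually_mono\<close>)
  also have "\<dots> = (\<integral>x. \<bar>cdiff P F G a x\<bar> \<partial>P) + (\<integral>x. \<bar>cdiff P F G b x\<bar> \<partial>P)"
    using cai cbi by simp
  also have "(\<integral>x. \<bar>cdiff P F G a x\<bar> \<partial>P) \<le> K * enn2real (cb P F G)"
    by (rule cb_use[OF prob F G am ab K])
  also have "(\<integral>x. \<bar>cdiff P F G b x\<bar> \<partial>P) \<le> 2 * tK K"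
  proof -
    have i1: "integrable P (\<lambda>x. \<bar>real_cond_exp P F b x\<bar>)" using sF.real_cond_exp_int(1)[OF bi] by auto
    have i2: "integrable P (\<lambda>x. \<bar>real_cond_exp P G b x\<bar>)" using sG.real_cond_exp_int(1)[OF bi] by auto
    have "(\<integral>x. \<bar>cdiff P F G b x\<bar> \<partial>P) \<le> (\<integral>x. \<bar>real_cond_exp P F b x\<bar> + \<bar>real_cond_exp P G b x\<bar> \<partial>P)"
      by (rule integral_mono[OF cbi]) (use i1 i2 in \<open>auto simp: cdiff_def\<close>)
    also have "\<dots> = (\<integral>x. \<bar>real_cond_exp P F b x\<bar> \<partial>P) + (\<integral>x. \<bar>real_cond_exp P G b x\<bar> \<partial>P)"
      using i1 i2 by simp
    also have "\<dots> \<le> (\<integral>x. \<bar>b x\<bar> \<partial>P) + (\<integral>x. \<bar>b x\<bar> \<partial>P)"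
      by (intro add_mono ce_L1[OF prob F bi] ce_L1[OF prob G bi])
    also have "(\<integral>x. \<bar>b x\<bar> \<partial>P) \<le> tK K" unfolding tK_def
      by (rule integral_mono[OF _ tK_int[OF less_imp_le[OF K]]]) (use bi bb in auto)
    finally show ?thesis by simp
  qed
  finally show ?thesis by simp
qed

end



context dens
begin

definition qq :: "'a measure \<Rightarrow> real \<Rightarrow> real" where
  "qq G d = (\<integral>x. (if real_cond_exp P G Z x < 2*d then 1 else 0) \<partial>Q)"

lemma est_f:
  assumes F: "subalgebra P F" and G: "subalgebra P G" and d: "0 < d" and K1: "0 < K1" and K2: "0 < K2"
    and fm[measurable]: "f \<in> borel_measurable P" and fb: "\<forall>x\<in>space P. \<bar>f x\<bar> \<le> 1"
  shows "ennreal (\<integral>x. \<bar>cdiff Q F G f x\<bar> \<partial>Q) \<le> ennreal (16*K1/d*(K2*enn2real (cb P F G) + 2*tK K2) + 8*tK K1 + 2*qq G d)"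
proof -
  interpret sF: sigma_finite_subalgebra P F using sfs[OF prob F] .
  interpret sG: sigma_finite_subalgebra P G using sfs[OF prob G] .
  define c where "c = enn2real (cb P F G)"
  define Nn where "Nn = real_cond_exp P F (\<lambda>x. Z x * f x)"
  define N0 where "N0 = real_cond_exp P G (\<lambda>x. Z x * f x)"
  define Dn where "Dn = real_cond_exp P F Z"
  define D0 where "D0 = real_cond_exp P G Z"
  define Y where "Y = (\<lambda>x. \<bar>Nn x - N0 x\<bar> + \<bar>Dn x - D0 x\<bar>)"
  define W where "W = (\<lambda>x. 4 * min 1 (Y x / d))"
  define I where "I = (\<lambda>x. if D0 x < 2*d then 1 else 0 :: real)"
  have [measurable]: "Nn \<in> borel_measurable P" "N0 \<in> borel_measurable P" "Dn \<in> borel_measurable P"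
    "D0 \<in> borel_measurable P" unfolding Nn_def N0_def Dn_def D0_def by simp_all
  have Ym[measurable]: "Y \<in> borel_measurable P" unfolding Y_def by measurable
  have Wm[measurable]: "W \<in> borel_measurable P" unfolding W_def by measurable
  have Im[measurable]: "I \<in> borel_measurable P" unfolding I_def by measurable
  have W0: "\<And>x. 0 \<le> W x" and W4: "\<And>x. W x \<le> 4" unfolding W_def Y_def using d by auto
  have I0: "\<And>x. 0 \<le> I x" and I1: "\<And>x. I x \<le> 1" unfolding I_def by auto
  have X: "AE x in Q. \<bar>cdiff Q F G f x\<bar> \<le> W x + 2 * I x"
    using bayes[OF F fm fb] bayes[OF G fm fb] AE_PQ[OF ND_bound[OF F fm fb]] AE_PQ[OF ND_bound[OF G fm fb]]
      D_pos[OF G]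
  proof eventually_elim
    case (elim x)
    have "\<bar>cdiff Q F G f x\<bar> = \<bar>Nn x / Dn x - N0 x / D0 x\<bar>"
      using elim(1,2) by (simp add: cdiff_def Nn_def N0_def Dn_def D0_def)
    also have "\<dots> \<le> 4 * min 1 ((\<bar>Nn x - N0 x\<bar> + \<bar>Dn x - D0 x\<bar>)/d) + 2 * (if D0 x < 2*d then 1 else 0)"
      by (rule ptw) (use elim d in \<open>auto simp: Nn_def N0_def Dn_def D0_def\<close>)
    finally show ?case by (simp add: W_def Y_def I_def)
  qed
  have Xi: "integrable Q (\<lambda>x. \<bar>cdiff Q F G f x\<bar>)"
  proof (rule Q.integrable_const_bound[of _ 2])
    show "AE x in Q. norm \<bar>cdiff Q F G f x\<bar> \<le> 2"
    proof -
      have "AE x in Q. \<bar>f x\<bar> \<le> 1" using fb by (intro AE_I2) auto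
      thus ?thesis using cdiff_bound[OF Qprob subQ[OF F] subQ[OF G], of f 1] by auto
    qed
  qed simp
  have WQi: "integrable Q W" by (rule Q.integrable_const_bound[of _ 4]) (use W0 W4 in auto)
  have IQi: "integrable Q I" by (rule Q.integrable_const_bound[of _ 1]) (use I0 I1 in auto)
  have WPi: "integrable P W" by (rule P.integrable_const_bound[of _ 4]) (use W0 W4 in auto)
  have zfi: "integrable P (\<lambda>x. Z x * f x)"
    by (rule Bochner_Integration.integrable_bound[OF Zi]) (use fb Z0 in \<open>auto simp: abs_mult intro!: mult_left_le\<close>)
  have i1: "integrable P (\<lambda>x. \<bar>cdiff P F G (\<lambda>x. Z x * f x) x\<bar>)" unfolding cdiff_def
    using sF.real_cond_exp_int(1)[OF zfi] sG.real_cond_exp_int(1)[OF zfi] by auto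
  have i2: "integrable P (\<lambda>x. \<bar>cdiff P F G (\<lambda>x. Z x * 1) x\<bar>)" unfolding cdiff_def
    using sF.real_cond_exp_int(1)[OF Zi] sG.real_cond_exp_int(1)[OF Zi] by auto
  have Yeq: "Y = (\<lambda>x. \<bar>cdiff P F G (\<lambda>x. Z x * f x) x\<bar> + \<bar>cdiff P F G (\<lambda>x. Z x * 1) x\<bar>)"
    by (simp add: Y_def cdiff_def Nn_def N0_def Dn_def D0_def)
  have Yi: "integrable P Y" unfolding Yeq using i1 i2 by simp
  have YP: "(\<integral>x. Y x \<partial>P) \<le> 2 * (K2 * c + 2 * tK K2)"
  proof -
    have "(\<integral>x. Y x \<partial>P) = (\<integral>x. \<bar>cdiff P F G (\<lambda>x. Z x * f x) x\<bar> \<partial>P) + (\<integral>x. \<bar>cdiff P F G (\<lambda>x. Z x * 1) x\<bar> \<partial>P)"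
      unfolding Yeq using i1 i2 by simp
    also have "\<dots> \<le> (K2 * c + 2 * tK K2) + (K2 * c + 2 * tK K2)" unfolding c_def
      by (intro add_mono LY[OF F G _ _ K2]) (use fb in auto)
    finally show ?thesis by simp
  qed
  have WP: "(\<integral>x. W x \<partial>P) \<le> 4 / d * (\<integral>x. Y x \<partial>P)"
  proof -
    have "(\<integral>x. W x \<partial>P) \<le> (\<integral>x. 4 / d * Y x \<partial>P)"
      by (rule integral_mono[OF WPi]) (use Yi d in \<open>auto simp: W_def\<close>)
    thus ?thesis by simp
  qed
  have tKi1: "integrable P (\<lambda>x. Z x - min (Z x) K1)" using tK_int K1 by simp
  have ZWi: "integrable P (\<lambda>x. Z x * W x)"
    by (rule Bochner_Integration.integrable_bound[OF integrable_mult_right[OF Zi, of 4]])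
       (use W0 W4 Z0 in \<open>auto simp: abs_mult mult.commute[of 4] intro!: AE_I2 mult_left_mono\<close>)
  have WQ: "(\<integral>x. W x \<partial>Q) \<le> 2 * K1 * (\<integral>x. W x \<partial>P) + 8 * tK K1"
  proof -
    have "(\<integral>x. W x \<partial>Q) = (\<integral>x. Z x * W x \<partial>P)" by (rule intQ) simp
    also have "\<dots> \<le> (\<integral>x. 2*K1*W x + 8*(Z x - min (Z x) K1) \<partial>P)"
    proof (rule integral_mono[OF ZWi])
      show "integrable P (\<lambda>x. 2*K1*W x + 8*(Z x - min (Z x) K1))"
        using WPi tKi1 by (intro Bochner_Integration.integrable_add integrable_mult_right)
      fix x show "Z x * W x \<le> 2*K1*W x + 8*(Z x - min (Z x) K1)" by (intro ptw2 W0 W4 Z0 K1)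
    qed
    also have "\<dots> = 2 * K1 * (\<integral>x. W x \<partial>P) + 8 * tK K1"
    proof -
      have "(\<integral>x. 2*K1*W x + 8*(Z x - min (Z x) K1) \<partial>P) = (\<integral>x. 2*K1*W x \<partial>P) + (\<integral>x. 8*(Z x - min (Z x) K1) \<partial>P)"
        by (rule Bochner_Integration.integral_add) (use WPi integrable_mult_right[OF tKi1, of 8] in auto)
      thus ?thesis by (simp only: integral_mult_right_zero tK_def)
    qed
    finally show ?thesis .
  qed
  have "(\<integral>x. \<bar>cdiff Q F G f x\<bar> \<partial>Q) \<le> (\<integral>x. W x + 2 * I x \<partial>Q)"
    by (rule integral_mono_AE[OF Xi _ X]) (use WQi IQi in simp)
  also have "\<dots> = (\<integral>x. W x \<partial>Q) + 2 * qq G d"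
    using WQi IQi by (simp add: qq_def I_def D0_def)
  also have "\<dots> \<le> 2 * K1 * (4 / d * (2 * (K2 * c + 2 * tK K2))) + 8 * tK K1 + 2 * qq G d"
  proof -
    have "2 * K1 * (\<integral>x. W x \<partial>P) \<le> 2 * K1 * (4 / d * (2 * (K2 * c + 2 * tK K2)))"
    proof (rule mult_left_mono)
      show "(\<integral>x. W x \<partial>P) \<le> 4 / d * (2 * (K2 * c + 2 * tK K2))"
        using WP YP d by (meson order.trans divide_nonneg_nonneg mult_left_mono zero_le_numeral less_imp_le)
    qed (use K1 in simp)
    thus ?thesis using WQ by linarith
  qed
  also have "\<dots> = 16*K1/d*(K2*c + 2*tK K2) + 8*tK K1 + 2*qq G d" by (simp add: field_simps)
  finally show ?thesis unfolding c_def by (rule ennreal_leI)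
qed

lemma est:
  assumes F: "subalgebra P F" and G: "subalgebra P G" and d: "0 < d" and K1: "0 < K1" and K2: "0 < K2"
  shows "cb Q F G \<le> ennreal (16*K1/d*(K2*enn2real (cb P F G) + 2*tK K2) + 8*tK K1 + 2*qq G d)"
  by (subst cb_def[of Q]) (rule SUP_least, use est_f[OF assms] in auto)

end



context dens
begin

lemma tK_lim:
  assumes e: "0 < e"
  shows "\<exists>K>0. tK K < e"
proof -
  have lim: "(\<lambda>m. tK (real m)) \<longlonglongrightarrow> (\<integral>x. 0 \<partial>P)"
    unfolding tK_def
  proof (rule integral_dominated_convergence[where w=Z])
    show "(\<lambda>x. 0::real) \<in> borel_measurable P" by simp
    show "\<And>i. (\<lambda>x. Z x - min (Z x) (real i)) \<in> borel_measurable P" by measurable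
    show "integrable P Z" by (rule Zi)
    show "AE x in P. (\<lambda>i. Z x - min (Z x) (real i)) \<longlonglongrightarrow> 0"
    proof (rule AE_I2)
      fix x
      obtain N where N: "Z x \<le> real N" using real_arch_simple by blast
      have "eventually (\<lambda>i. Z x - min (Z x) (real i) = 0) sequentially"
        unfolding eventually_sequentially
      proof (intro exI[of _ N] allI impI)
        fix i assume "N \<le> i"
        hence "real N \<le> real i" by simp
        hence "Z x \<le> real i" using N by linarith
        thus "Z x - min (Z x) (real i) = 0" by simp
      qed
      thus "(\<lambda>i. Z x - min (Z x) (real i)) \<longlonglongrightarrow> 0" by (rule tendsto_eventually)
    qed
    show "\<And>i. AE x in P. norm (Z x - min (Z x) (real i)) \<le> Z x"
      using Z0 by (intro AE_I2) auto
  qed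
  hence "eventually (\<lambda>m. tK (real m) < e) sequentially"
    using order_tendstoD(2)[OF lim] e by simp
  hence "eventually (\<lambda>m. tK (real m) < e \<and> 1 \<le> m) sequentially"
    using eventually_ge_at_top[of "1::nat"] by (simp add: eventually_conj_iff)
  then obtain m where "tK (real m) < e" "1 \<le> m" by (metis (lifting) eventually_sequentially order.refl)
  thus ?thesis by (intro exI[of _ "real m"]) auto
qed

lemma qq_lim:
  assumes G: "subalgebra P G" and e: "0 < e"
  shows "\<exists>d>0. qq G d < e"
proof -
  define D0 where "D0 = real_cond_exp P G Z"
  have D0m[measurable]: "D0 \<in> borel_measurable Q" unfolding D0_def by simp
  have lim: "(\<lambda>m. qq G (1 / (real m + 1))) \<longlonglongrightarrow> (\<integral>x. 0 \<partial>Q)"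
    unfolding qq_def D0_def[symmetric]
  proof (rule integral_dominated_convergence[where w="\<lambda>x. 1"])
    show "(\<lambda>x. 0::real) \<in> borel_measurable Q" by simp
    show "\<And>i. (\<lambda>x. if D0 x < 2 * (1 / (real i + 1)) then 1 else 0::real) \<in> borel_measurable Q"
      by measurable
    show "integrable Q (\<lambda>x. 1::real)" by simp
    show "AE x in Q. (\<lambda>i. if D0 x < 2 * (1 / (real i + 1)) then 1 else 0::real) \<longlonglongrightarrow> 0"
      using D_pos[OF G]
    proof (rule eventually_mono)
      fix x assume x: "0 < real_cond_exp P G Z x"
      have l: "(\<lambda>i. 1 / (real i + 1)) \<longlonglongrightarrow> 0"
        using LIMSEQ_inverse_real_of_nat by (simp add: inverse_eq_divide add.commute)
      have "(\<lambda>i. 2 * (1 / (real i + 1))) \<longlonglongrightarrow> 2 * 0"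
        by (intro tendsto_mult tendsto_const l)
      hence "eventually (\<lambda>i. 2 * (1 / (real i + 1)) < D0 x) sequentially"
        using order_tendstoD(2) x unfolding D0_def by fastforce
      hence "eventually (\<lambda>i. (if D0 x < 2 * (1 / (real i + 1)) then 1 else 0::real) = 0) sequentially"
        by (auto elim!: eventually_mono)
      thus "(\<lambda>i. if D0 x < 2 * (1 / (real i + 1)) then 1 else 0::real) \<longlonglongrightarrow> 0"
        by (rule tendsto_eventually)
    qed
    show "\<And>i. AE x in Q. norm (if D0 x < 2 * (1 / (real i + 1)) then 1 else 0::real) \<le> 1"
      by (intro AE_I2) auto
  qed
  hence "eventually (\<lambda>m. qq G (1 / (real m + 1)) < e) sequentially"
    using order_tendstoD(2)[OF lim] e by simp
  then obtain m where "qq G (1 / (real m + 1)) < e" by (metis (lifting) eventually_sequentially order.refl)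
  thus ?thesis by (intro exI[of _ "1 / (real m + 1)"]) auto
qed

lemma B_lim:
  assumes B: "\<And>n. subalgebra P (B n)" and lim: "(\<lambda>n. cb P (B n) (B 0)) \<longlonglongrightarrow> 0"
  shows "(\<lambda>n. cb Q (B n) (B 0)) \<longlonglongrightarrow> 0"
proof (rule ennreal_tendsto_0I)
  fix e :: real assume e: "0 < e"
  obtain d where d: "0 < d" "qq (B 0) d < e/8" using qq_lim[OF B, of "e/8"] e by auto
  obtain K1 where K1: "0 < K1" "tK K1 < e/32" using tK_lim[of "e/32"] e by auto
  obtain K2 where K2: "0 < K2" "tK K2 < e*d/(128*K1)" using tK_lim[of "e*d/(128*K1)"] e d K1 by auto
  define c where "c = (\<lambda>n. enn2real (cb P (B n) (B 0)))"
  have c0: "c \<longlonglongrightarrow> 0" unfolding c_def using tendsto_enn2real[of _ 0] lim by simp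
  have "(\<lambda>n. 16*K1/d*K2 * c n) \<longlonglongrightarrow> 16*K1/d*K2 * 0" by (intro tendsto_mult tendsto_const c0)
  hence ev: "eventually (\<lambda>n. 16*K1/d*K2 * c n < e/4) sequentially"
    using order_tendstoD(2)[of "\<lambda>n. 16*K1/d*K2 * c n" 0 sequentially "e/4"] e by simp
  show "eventually (\<lambda>n. cb Q (B n) (B 0) \<le> ennreal e) sequentially"
    using ev
  proof (rule eventually_mono)
    fix n assume n: "16*K1/d*K2 * c n < e/4"
    have t2: "32*K1/d * tK K2 < e/4"
    proof -
      have "32*K1/d * tK K2 < 32*K1/d * (e*d/(128*K1))"
        using K2(2) K1(1) d(1) by (intro mult_strict_left_mono) auto
      also have "\<dots> = e/4" using K1(1) d(1) by (simp add: field_simps)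
      finally show ?thesis .
    qed
    have "16*K1/d*(K2*c n + 2*tK K2) + 8*tK K1 + 2*qq (B 0) d =
          16*K1/d*K2 * c n + 32*K1/d * tK K2 + 8*tK K1 + 2*qq (B 0) d"
      by (simp add: algebra_simps)
    also have "\<dots> < e" using n t2 K1(2) d(2) by linarith
    finally have lt: "16*K1/d*(K2*c n + 2*tK K2) + 8*tK K1 + 2*qq (B 0) d < e" .
    have "cb Q (B n) (B 0) \<le> ennreal (16*K1/d*(K2*c n + 2*tK K2) + 8*tK K1 + 2*qq (B 0) d)"
      unfolding c_def by (rule est[OF B B d(1) K1(1) K2(1)])
    also have "\<dots> \<le> ennreal e" using lt by (intro ennreal_leI) simp
    finally show "cb Q (B n) (B 0) \<le> ennreal e" .
  qed
qed

end

lemma exists_dens: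
  assumes P: "prob_space P" and Q: "prob_space Q" and s: "sets Q = sets P" and n: "null_sets Q = null_sets P"
  shows "\<exists>Z. dens P Z \<and> Q = density P (\<lambda>x. ennreal (Z x))"
proof -
  interpret P: prob_space P by fact
  interpret Qp: prob_space Q by fact
  have ac: "absolutely_continuous P Q" unfolding absolutely_continuous_def using n by simp
  have eq: "density P (RN_deriv P Q) = Q" by (rule P.density_RN_deriv[OF ac s])
  have fin: "AE x in P. RN_deriv P Q x \<noteq> \<infinity>"
    by (rule P.RN_deriv_finite[OF _ ac s]) (rule Qp.sigma_finite_measure_axioms)
  define Z where "Z = (\<lambda>x. enn2real (RN_deriv P Q x))"
  have Zm[measurable]: "Z \<in> borel_measurable P" unfolding Z_def by simp
  have "density P (\<lambda>x. ennreal (Z x)) = density P (RN_deriv P Q)"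
    by (rule density_cong) (use fin in \<open>auto simp: Z_def less_top elim!: eventually_mono\<close>)
  hence Qeq: "Q = density P (\<lambda>x. ennreal (Z x))" using eq by simp
  have "integrable Q (\<lambda>x. 1::real)" by simp
  hence "integrable P (\<lambda>x. Z x)" unfolding Qeq by (subst (asm) integrable_density) (auto simp: Z_def)
  hence Zi: "integrable P Z" .
  have Qp': "prob_space (density P (\<lambda>x. ennreal (Z x)))" using Q unfolding Qeq .
  have Z0': "\<And>x. 0 \<le> Z x" by (simp add: Z_def)
  have "dens P Z" by (rule dens.intro[OF P Zm Z0' Zi Qp'])
  thus ?thesis using Qeq by blast
qed



lemma dir_lemma:
  assumes pP: "prob_space P" and pQ: "prob_space Q" and s: "sets Q = sets P" and n: "null_sets Q = null_sets P"
    and subP: "\<And>n. subalgebra P (B n)" and subQ': "\<And>n. subalgebra Q (B n)"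
    and q1: "1 \<le> q" and qp: "q < p"
    and lim: "(\<lambda>n. cond_exp_diff_opnorm P p q (B n) (B 0)) \<longlonglongrightarrow> 0"
  shows "(\<lambda>n. cond_exp_diff_opnorm Q p q (B n) (B 0)) \<longlonglongrightarrow> 0"
proof -
  obtain Z where d: "dens P Z" and Qeq: "Q = density P (\<lambda>x. ennreal (Z x))"
    using exists_dens[OF pP pQ s n] by blast
  have "(\<lambda>n. cb P (B n) (B 0)) \<longlonglongrightarrow> 0" by (rule A1[OF pP subP q1 qp lim])
  hence "(\<lambda>n. cb (density P (\<lambda>x. ennreal (Z x))) (B n) (B 0)) \<longlonglongrightarrow> 0"
    by (rule dens.B_lim[OF d subP])
  hence "(\<lambda>n. cb Q (B n) (B 0)) \<longlonglongrightarrow> 0" using Qeq by simp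
  thus ?thesis by (rule A2[OF pQ subQ' q1 qp])
qed

theorem mainTheorem9:
  fixes P Q :: "'a measure" and B :: "nat \<Rightarrow> 'a measure" and p q :: ennreal
  assumes "prob_space P" and "prob_space Q" and "equiv_measure P Q"
    and "1 \<le> q" and "q < p"
    and "\<And>n. sigma_subfield P (B n)"
  shows "(\<lambda>n. cond_exp_diff_opnorm P p q (B n) (B 0)) \<longlonglongrightarrow> 0 \<longleftrightarrow>
         (\<lambda>n. cond_exp_diff_opnorm Q p q (B n) (B 0)) \<longlonglongrightarrow> 0"
proof -
  have sQ: "sets Q = sets P" and nQ: "null_sets Q = null_sets P"
    using assms(3) by (auto simp: equiv_measure_def)
  have spQ: "space Q = space P" using sQ by (rule sets_eq_imp_space_eq)
  have subP: "\<And>n. subalgebra P (B n)" using assms(6) by (simp add: sigma_subfield_def)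
  have subQ': "\<And>n. subalgebra Q (B n)" using subP spQ sQ by (simp add: subalgebra_def)
  show ?thesis
    using dir_lemma[where B=B, OF assms(1,2) sQ nQ subP subQ' assms(4,5)]
      dir_lemma[where B=B, OF assms(2,1) sQ[symmetric] nQ[symmetric] subQ' subP assms(4,5)] by blast
qed

end
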